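(* Let $A(x)=-(x-\frac13)^2$ on $[0,1]$, with the two maps $\tau_1(x)=x/2$ and $\tau_2(x)=(x+1)/2$ (the inverse branches of $T(x)=2x \pmod 1$). Let $V_1(x)=\frac{10}{63}-\frac{2x}{21}-\frac{x^2}{3}$, $V_2(x)=\frac{5}{63}+\frac{2x}{7}-\frac{x^2}{3}$, $V_3(x)=\frac{10x}{21}-\frac{x^2}{3}$, $V_4(x)=-\frac{5}{63}+\frac{4x}{7}-\frac{x^2}{3}$, and $V(x)=\max\{V_1(x),V_2(x),V_3(x),V_4(x)\}$. Then $m(A)=-\frac{2}{63}$ and $V$ is a calibrated subaction for $A$, i.e. for every $x\in[0,1]$, $$V(x)=\max\{A(\tau_1(x))+V(\tau_1(x)),\,A(\tau_2(x))+V(\tau_2(x))\}-m(A).$$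
   Context: $m(A)$ denotes the supremum of $\int A\,d\rho$ over probabilities $\rho$ invariant for $T(x)=2x\pmod 1$. A calibrated subaction (in this non-periodic setting on $[0,1]$) is a continuous $V:[0,1]\to\mathbb{R}$ with $V(x)=\max_{i\in\{1,2\}}[A(\tau_i(x))+V(\tau_i(x))]-m(A)$ for all $x\in[0,1]$. *)

theory Defs
  imports "HOL-Probability.Probability"
begin

definition doubling :: "real \<Rightarrow> real" where
  "doubling x = 2 * x - of_int \<lfloor>2 * x\<rfloor>"

definition tau1 :: "real \<Rightarrow> real" where "tau1 x = x / 2"
definition tau2 :: "real \<Rightarrow> real" where "tau2 x = (x + 1) / 2"

definition invariant_prob :: "real measure \<Rightarrow> bool" where
  "invariant_prob M \<longleftrightarrow> prob_space M \<and>
     sets M = sets (restrict_space borel {0..1}) \<and>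
     doubling \<in> measurable M M \<and>
     (\<forall>B \<in> sets M. emeasure M (doubling -` B \<inter> space M) = emeasure M B)"

definition max_erg :: "(real \<Rightarrow> real) \<Rightarrow> real" where
  "max_erg A = Sup {integral\<^sup>L M A | M. invariant_prob M}"

definition calibrated_subaction :: "(real \<Rightarrow> real) \<Rightarrow> (real \<Rightarrow> real) \<Rightarrow> bool" where
  "calibrated_subaction A V \<longleftrightarrow> continuous_on {0..1} V \<and>
     (\<forall>x \<in> {0..1}. V x = max (A (tau1 x) + V (tau1 x)) (A (tau2 x) + V (tau2 x)) - max_erg A)"

end

theory Submission imports Defs begin

definition Af :: "real \<Rightarrow> real" where "Af = (\<lambda>x. - ((x - 1/3) ^ 2))"
definition Vf :: "real \<Rightarrow> real" where "Vf = (\<lambda>x. max (max (10/63 - 2*x/21 - x ^ 2/3) (5/63 + 2*x/7 - x ^ 2/3))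
                      (max (10*x/21 - x ^ 2/3) (-5/63 + 4*x/7 - x ^ 2/3)))"
definition Lf :: "real \<Rightarrow> real" where
  "Lf x = max (max (10/63 - 2*x/21) (5/63 + 2*x/7)) (max (10*x/21) (-5/63 + 4*x/7))"

lemma lin:
  fixes x :: real assumes "0 \<le> x" "x \<le> 1"
  shows "Lf x = max (x/3 - 1/9 + Lf (x/2)) (-x/3 - 1/9 + Lf ((x+1)/2)) + 2/63"
  using assms unfolding Lf_def by (simp add: max_def field_simps split: if_split)

lemma Vform: "Vf x = Lf x - x^2/3"
  unfolding Vf_def Lf_def by (simp add: max_def)

lemma cal: assumes "0 \<le> x" "x \<le> 1"
  shows "Vf x = max (Af (tau1 x) + Vf (tau1 x)) (Af (tau2 x) + Vf (tau2 x)) + 2/63"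
proof -
  have e1: "Af (tau1 x) + Vf (tau1 x) = x/3 - 1/9 + Lf (x/2) - x^2/3"
    unfolding Af_def Vform tau1_def by (simp add: power2_eq_square field_simps)
  have e2: "Af (tau2 x) + Vf (tau2 x) = -x/3 - 1/9 + Lf ((x+1)/2) - x^2/3"
    unfolding Af_def Vform tau2_def by (simp add: power2_eq_square field_simps)
  have "max (x/3 - 1/9 + Lf (x/2) - x^2/3) (-x/3 - 1/9 + Lf ((x+1)/2) - x^2/3)
     = max (x/3 - 1/9 + Lf (x/2)) (-x/3 - 1/9 + Lf ((x+1)/2)) - x^2/3"
    by (simp add: max_def)
  then show ?thesis using e1 e2 Vform[of x] lin[OF assms] by simp
qed

lemma doubling_range: "0 \<le> doubling x" "doubling x < 1"
  unfolding doubling_def by (simp_all add: floor_le_iff) linarith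

lemma key: assumes "0 \<le> y" "y \<le> 1"
  shows "Af y + Vf y - Vf (doubling y) \<le> -2/63"
proof (cases "y = 1")
  case True
  then have "doubling y = 0" by (simp add: doubling_def)
  then show ?thesis using True by (simp add: Af_def Vf_def power2_eq_square)
next
  case False
  hence y1: "y < 1" using assms by simp
  show ?thesis
  proof (cases "y < 1/2")
    case True
    then have "\<lfloor>2*y\<rfloor> = 0" using assms by (simp add: floor_eq_iff)
    then have d: "doubling y = 2*y" by (simp add: doubling_def)
    have "tau1 (doubling y) = y" unfolding d tau1_def by simp
    then show ?thesis using cal[of "doubling y"] doubling_range[of y] by simp
  next
    case False
    then have "\<lfloor>2*y\<rfloor> = 1" using y1 by (simp add: floor_eq_iff)
    then have d: "doubling y = 2*y - 1" by (simp add: doubling_def)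
    have "tau2 (doubling y) = y" unfolding d tau2_def by simp
    then show ?thesis using cal[of "doubling y"] doubling_range[of y] by simp
  qed
qed

lemma Af_cont: "continuous_on UNIV Af" unfolding Af_def by (intro continuous_intros)
lemma Vf_cont: "continuous_on UNIV Vf" unfolding Vf_def by (intro continuous_intros) auto

lemma sq_bounds: "0 \<le> x \<Longrightarrow> x \<le> (1::real) \<Longrightarrow> 0 \<le> x^2 \<and> x^2 \<le> x"
proof -
  assume a: "0 \<le> x" "x \<le> 1"
  have "x*x \<le> x*1" by (rule mult_left_mono) (use a in auto)
  then show ?thesis by (simp add: power2_eq_square)
qed

lemma Af_bound: "0 \<le> x \<Longrightarrow> x \<le> 1 \<Longrightarrow> \<bar>Af x\<bar> \<le> 1"
proof -
  assume a: "0 \<le> x" "x \<le> 1"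
  have e: "(x-1/3)^2 = x^2 - 2*x/3 + 1/9" by (simp add: power2_eq_square algebra_simps)
  have h: "0 \<le> x^2" "x^2 \<le> x" using sq_bounds[OF a] by auto
  show ?thesis unfolding Af_def e using h a by (simp add: abs_le_iff) (use h a in linarith)
qed

lemma mx': "-1 \<le> a \<Longrightarrow> a \<le> 1 \<Longrightarrow> -1 \<le> b \<Longrightarrow> b \<le> 1 \<Longrightarrow> \<bar>max a b\<bar> \<le> (1::real)"
  by (simp add: max_def abs_le_iff)

lemma Vf_bound0: "0 \<le> x \<Longrightarrow> x \<le> 1 \<Longrightarrow> 0 \<le> x^2 \<Longrightarrow> x^2 \<le> x \<Longrightarrow> \<bar>Vf x\<bar> \<le> 1"
  unfolding Vf_def by (intro mx'; linarith)

lemma Vf_bound: "0 \<le> x \<Longrightarrow> x \<le> 1 \<Longrightarrow> \<bar>Vf x\<bar> \<le> 1"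
  using Vf_bound0 sq_bounds by blast

lemma doubling_meas: "doubling \<in> borel_measurable borel"
  unfolding doubling_def by measurable

lemma upper:
  assumes M: "invariant_prob M"
  shows "integral\<^sup>L M Af \<le> -2/63"
proof -
  have ps: "prob_space M" and sM: "sets M = sets (restrict_space borel {0..1::real})"
    and dm: "doubling \<in> measurable M M"
    and inv: "\<And>B. B \<in> sets M \<Longrightarrow> emeasure M (doubling -` B \<inter> space M) = emeasure M B"
    using M unfolding invariant_prob_def by auto
  interpret prob_space M by fact
  have sp: "space M = {0..1}"
    using sets_eq_imp_space_eq[OF sM] by simp
  have mA: "Af \<in> borel_measurable M"
    using measurable_restrict_space1[OF borel_measurable_continuous_onI[OF Af_cont]]
    by (simp add: measurable_cong_sets[OF sM refl])
  have mV: "Vf \<in> borel_measurable M"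
    using measurable_restrict_space1[OF borel_measurable_continuous_onI[OF Vf_cont]]
    by (simp add: measurable_cong_sets[OF sM refl])
  have mVT: "(\<lambda>x. Vf (doubling x)) \<in> borel_measurable M"
    using measurable_compose[OF dm mV] by (simp add: o_def)
  have iA: "integrable M Af"
    by (rule integrable_const_bound[where B=1]) (auto simp: sp Af_bound mA)
  have iV: "integrable M Vf"
    by (rule integrable_const_bound[where B=1]) (auto simp: sp Vf_bound mV)
  have bVT: "\<And>x. \<bar>Vf (doubling x)\<bar> \<le> 1" using doubling_range Vf_bound by (meson less_imp_le)
  have iVT: "integrable M (\<lambda>x. Vf (doubling x))"
    by (rule integrable_const_bound[where B=1]) (auto simp: mVT bVT)
  have dist: "distr M M doubling = M"
    by (rule measure_eqI) (simp_all add: emeasure_distr[OF dm] inv)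
  have eqV: "integral\<^sup>L M (\<lambda>x. Vf (doubling x)) = integral\<^sup>L M Vf"
    using integral_distr[OF dm, of Vf] mV by (simp add: dist)
  have "integral\<^sup>L M Af = integral\<^sup>L M (\<lambda>x. Af x + Vf x - Vf (doubling x))"
    using iA iV iVT eqV by simp
  also have "\<dots> \<le> integral\<^sup>L M (\<lambda>x. -2/63)"
    by (rule integral_mono) (use iA iV iVT key in \<open>auto simp: sp\<close>)
  also have "\<dots> = -2/63" by (simp add: prob_space)
  finally show ?thesis .
qed

lemma dS: "doubling (1/7) = 2/7" "doubling (2/7) = 4/7" "doubling (4/7) = 1/7"
  unfolding doubling_def by (simp_all add: floor_eq_iff)

lemma lower: "\<exists>M. invariant_prob M \<and> integral\<^sup>L M Af = -2/63"
proof -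
  define S :: "real set" where "S = {1/7, 2/7, 4/7}"
  have Sf: "finite S" "S \<noteq> {}" by (auto simp: S_def)
  define p where "p = pmf_of_set S"
  have sp: "set_pmf p = S" using Sf by (simp add: p_def)
  define N where "N = restrict_space borel {0..1::real}"
  define g :: "real \<Rightarrow> real" where "g x = (if x \<in> {0..1} then x else 0)" for x
  define M where "M = distr (measure_pmf p) N g"
  have gm: "g \<in> measurable (measure_pmf p) N" by (auto simp: N_def g_def)
  have sM: "sets M = sets N" by (simp add: M_def)
  have spM: "space M = {0..1}" by (simp add: M_def N_def)
  have ps: "prob_space M" unfolding M_def
    by (rule prob_space.prob_space_distr[OF prob_space_measure_pmf gm])
  have dmN: "doubling \<in> measurable N N" unfolding N_def
    by (rule measurable_restrict_space3[OF doubling_meas]) (auto simp: doubling_range less_imp_le)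
  have dm: "doubling \<in> measurable M M"
    using dmN by (simp add: measurable_cong_sets[OF sM sM])
  have injd: "inj_on doubling S" by (auto simp: S_def inj_on_def dS)
  have imd: "doubling ` S = S" by (auto simp: S_def dS)
  have mapp: "map_pmf doubling p = p"
    unfolding p_def using map_pmf_of_set_inj[OF injd Sf(2) Sf(1)] imd by simp
  have gS: "\<And>X. g -` X \<inter> S = X \<inter> S" by (auto simp: g_def S_def)
  have em: "\<And>X. X \<in> sets N \<Longrightarrow> emeasure M X = emeasure p (X \<inter> S)"
  proof -
    fix X assume X: "X \<in> sets N"
    have "emeasure M X = emeasure p (g -` X \<inter> space (measure_pmf p))"
      unfolding M_def using X gm by (simp add: emeasure_distr)
    also have "\<dots> = emeasure p (g -` X \<inter> set_pmf p)" by (simp add: emeasure_Int_set_pmf)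
    also have "\<dots> = emeasure p (X \<inter> S)" using gS sp by simp
    finally show "emeasure M X = emeasure p (X \<inter> S)" .
  qed
  have inv: "\<forall>B \<in> sets M. emeasure M (doubling -` B \<inter> space M) = emeasure M B"
  proof
    fix B assume B: "B \<in> sets M"
    have B1: "doubling -` B \<inter> space M \<in> sets N"
      using measurable_sets[OF dm B] sM by simp
    have "emeasure M (doubling -` B \<inter> space M) = emeasure p (doubling -` B \<inter> {0..1} \<inter> S)"
      using em[OF B1] spM by simp
    also have "doubling -` B \<inter> {0..1} \<inter> S = doubling -` B \<inter> set_pmf p"
      using sp by (auto simp: S_def)
    also have "emeasure p (doubling -` B \<inter> set_pmf p) = emeasure (map_pmf doubling p) B"
      by (simp add: emeasure_Int_set_pmf)
    also have "\<dots> = emeasure p (B \<inter> S)" using mapp emeasure_Int_set_pmf[of p B] sp by simp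
    also have "\<dots> = emeasure M B" using em B sM by simp
    finally show "emeasure M (doubling -` B \<inter> space M) = emeasure M B" .
  qed
  have "invariant_prob M"
    unfolding invariant_prob_def using ps sM dm inv by (simp add: N_def)
  moreover have "integral\<^sup>L M Af = -2/63"
  proof -
    have mA: "Af \<in> borel_measurable N"
      unfolding N_def by (rule measurable_restrict_space1[OF borel_measurable_continuous_onI[OF Af_cont]])
    have "integral\<^sup>L M Af = (\<integral>x. Af (g x) \<partial>measure_pmf p)"
      unfolding M_def using integral_distr[OF gm mA] by simp
    also have "\<dots> = (\<Sum>a\<in>S. Af (g a) * pmf p a)"
      by (rule integral_measure_pmf_real) (use Sf sp in auto)
    also have "\<dots> = -2/63"
      unfolding p_def using Sf by (simp add: S_def g_def Af_def power2_eq_square)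
    finally show ?thesis .
  qed
  ultimately show ?thesis by blast
qed

theorem mainTheorem2:
  fixes A V :: "real \<Rightarrow> real"
  assumes "A = (\<lambda>x. - ((x - 1/3) ^ 2))"
    and "V = (\<lambda>x. max (max (10/63 - 2*x/21 - x ^ 2/3) (5/63 + 2*x/7 - x ^ 2/3))
                      (max (10*x/21 - x ^ 2/3) (-5/63 + 4*x/7 - x ^ 2/3)))"
  shows "max_erg A = -2/63 \<and> calibrated_subaction A V"
proof -
  have A: "A = Af" using assms(1) by (simp add: Af_def)
  have V: "V = Vf" using assms(2) by (simp add: Vf_def)
  obtain M0 where M0: "invariant_prob M0" "integral\<^sup>L M0 Af = -2/63" using lower by blast
  have ex: "\<exists>M. -2/63 = integral\<^sup>L M Af \<and> invariant_prob M" using M0 by (intro exI[of _ M0]) simp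
  have me: "max_erg Af = -2/63"
    unfolding max_erg_def
    by (rule cSup_eq_maximum) (use ex upper in auto)
  have "calibrated_subaction Af Vf"
    unfolding calibrated_subaction_def me
    using continuous_on_subset[OF Vf_cont] cal by auto
  then show ?thesis using me A V by simp
qed

end
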